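(* Let $\mathcal M=(S,L,\tau,\ell)$ be an LMC (possibly with infinitely many states). There is a policy $T$ such that for all $(s,t)\in S^2$ and all policies $T'$, \[ d(s,t)=\mathcal R^T_{\mathcal M}((s,t),S^2_1)\le\mathcal R^{T'}_{\mathcal M}((s,t),S^2_1). \] In particular $d=\min_{T}\mathcal R^T_{\mathcal M}(\cdot,S^2_1)$, the minimum being over all policies.
   Context: An LMC $\mathcal M=(S,L,\tau,\ell)$ has a nonempty countable state set $S$, finite label set $L$, finitely-branching transition function $\tau:S\to\mathrm{Distr}(S)$ and labelling $\ell$. The probabilistic bisimilarity distance $d$ is the least fixed point of $\Delta(e)(s,t)=1$ if $\ell(s)\ne\ell(t)$ and $\Delta(e)(s,t)=\min_{\omega\in\Omega(\tau(s),\tau(t))}\sum_{u,v}\omega(u,v)e(u,v)$ otherwise, where $\Omega(\mu,\nu)$ is the set of couplings (distributions on $S\times S$ with marginals $\mu,\nu$). Probabilistic bisimilarity $\sim$ is the largest equivalence $R$ on $S$ such that $(s,t)\in R$ implies $\ell(s)=\ell(t)$ and $\tau(s)(E)=\tau(t)(E)$ for every $R$-class $E$. Partition $S^2$ into $S^2_0=\{(s,t):s\sim t\}$, $S^2_1=\{(s,t):\ell(s)\ne\ell(t)\}$, $S^2_?=S^2\setminus(S^2_0\cup S^2_1)$. A policy is a map $T:S^2_?\to\mathrm{Distr}(S^2)$ with $T(s,t)\in\Omega(\tau(s),\tau(t))$. The Markov chain $\mathcal C^T_{\mathcal M}$ on $S^2$ has every pair in $S^2_0\cup S^2_1$ absorbing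 and from $(u,v)\in S^2_?$ moves to $(x,y)$ with probability $T(u,v)(x,y)$. $\mathcal R^T_{\mathcal M}((s,t),Z)$ is the probability that $\mathcal C^T_{\mathcal M}$ started in $(s,t)$ reaches $Z\subseteq S^2$. *)

theory Defs
  imports "HOL-Probability.Probability"
begin

definition lmc :: "'s set \<Rightarrow> 'l set \<Rightarrow> ('s \<Rightarrow> 's pmf) \<Rightarrow> ('s \<Rightarrow> 'l) \<Rightarrow> bool" where
  "lmc S L \<tau> lab \<longleftrightarrow> S \<noteq> {} \<and> countable S \<and> finite L \<and>
     (\<forall>s\<in>S. set_pmf (\<tau> s) \<subseteq> S \<and> finite (set_pmf (\<tau> s)) \<and> lab s \<in> L)"

definition couplings :: "'s pmf \<Rightarrow> 's pmf \<Rightarrow> ('s \<times> 's) pmf set" where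
  "couplings \<mu> \<nu> = {\<omega>. map_pmf fst \<omega> = \<mu> \<and> map_pmf snd \<omega> = \<nu>}"

text \<open>The operator Delta (the minimum over couplings is written as an infimum;
it is attained since the set of couplings of finitely supported distributions is a compact polytope).\<close>
definition Delta :: "('s \<Rightarrow> 's pmf) \<Rightarrow> ('s \<Rightarrow> 'l) \<Rightarrow> ('s \<times> 's \<Rightarrow> real) \<Rightarrow> 's \<times> 's \<Rightarrow> real" where
  "Delta \<tau> lab e = (\<lambda>(s,t). if lab s \<noteq> lab t then 1
      else Inf ((\<lambda>\<omega>. \<Sum>p\<in>set_pmf \<omega>. pmf \<omega> p * e p) ` couplings (\<tau> s) (\<tau> t)))"

definition dfun :: "'s set \<Rightarrow> ('s \<times> 's \<Rightarrow> real) \<Rightarrow> bool" where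
  "dfun S e \<longleftrightarrow> (\<forall>p. p \<notin> S \<times> S \<longrightarrow> e p = 0) \<and> (\<forall>p\<in>S \<times> S. 0 \<le> e p \<and> e p \<le> 1)"

definition is_fixpoint :: "'s set \<Rightarrow> ('s \<Rightarrow> 's pmf) \<Rightarrow> ('s \<Rightarrow> 'l) \<Rightarrow> ('s \<times> 's \<Rightarrow> real) \<Rightarrow> bool" where
  "is_fixpoint S \<tau> lab e \<longleftrightarrow> dfun S e \<and> (\<forall>p\<in>S \<times> S. Delta \<tau> lab e p = e p)"

definition bdist :: "'s set \<Rightarrow> ('s \<Rightarrow> 's pmf) \<Rightarrow> ('s \<Rightarrow> 'l) \<Rightarrow> 's \<times> 's \<Rightarrow> real" where
  "bdist S \<tau> lab = (THE e. is_fixpoint S \<tau> lab e \<and>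
      (\<forall>e'. is_fixpoint S \<tau> lab e' \<longrightarrow> (\<forall>p\<in>S \<times> S. e p \<le> e' p)))"

definition prob_bisim :: "'s set \<Rightarrow> ('s \<Rightarrow> 's pmf) \<Rightarrow> ('s \<Rightarrow> 'l) \<Rightarrow> ('s \<times> 's) set \<Rightarrow> bool" where
  "prob_bisim S \<tau> lab R \<longleftrightarrow> equiv S R \<and>
     (\<forall>(s,t)\<in>R. lab s = lab t \<and>
        (\<forall>E\<in>S // R. measure_pmf.prob (\<tau> s) E = measure_pmf.prob (\<tau> t) E))"

definition bisimilar :: "'s set \<Rightarrow> ('s \<Rightarrow> 's pmf) \<Rightarrow> ('s \<Rightarrow> 'l) \<Rightarrow> ('s \<times> 's) set" where
  "bisimilar S \<tau> lab = \<Union>{R. prob_bisim S \<tau> lab R}"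

definition S2_0 :: "'s set \<Rightarrow> ('s \<Rightarrow> 's pmf) \<Rightarrow> ('s \<Rightarrow> 'l) \<Rightarrow> ('s \<times> 's) set" where
  "S2_0 S \<tau> lab = bisimilar S \<tau> lab"

definition S2_1 :: "'s set \<Rightarrow> ('s \<Rightarrow> 'l) \<Rightarrow> ('s \<times> 's) set" where
  "S2_1 S lab = {(s,t) \<in> S \<times> S. lab s \<noteq> lab t}"

definition S2_q :: "'s set \<Rightarrow> ('s \<Rightarrow> 's pmf) \<Rightarrow> ('s \<Rightarrow> 'l) \<Rightarrow> ('s \<times> 's) set" where
  "S2_q S \<tau> lab = S \<times> S - (S2_0 S \<tau> lab \<union> S2_1 S lab)"

definition policy :: "'s set \<Rightarrow> ('s \<Rightarrow> 's pmf) \<Rightarrow> ('s \<Rightarrow> 'l) \<Rightarrow> ('s \<times> 's \<Rightarrow> ('s \<times> 's) pmf) \<Rightarrow> bool" where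
  "policy S \<tau> lab T \<longleftrightarrow> (\<forall>(s,t)\<in>S2_q S \<tau> lab. T (s,t) \<in> couplings (\<tau> s) (\<tau> t))"

definition chain_step :: "'s set \<Rightarrow> ('s \<Rightarrow> 's pmf) \<Rightarrow> ('s \<Rightarrow> 'l) \<Rightarrow> ('s \<times> 's \<Rightarrow> ('s \<times> 's) pmf)
    \<Rightarrow> 's \<times> 's \<Rightarrow> ('s \<times> 's) pmf" where
  "chain_step S \<tau> lab T p = (if p \<in> S2_q S \<tau> lab then T p else return_pmf p)"

fun reach_n :: "'s set \<Rightarrow> ('s \<Rightarrow> 's pmf) \<Rightarrow> ('s \<Rightarrow> 'l) \<Rightarrow> ('s \<times> 's \<Rightarrow> ('s \<times> 's) pmf)
    \<Rightarrow> ('s \<times> 's) set \<Rightarrow> nat \<Rightarrow> 's \<times> 's \<Rightarrow> real" where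
  "reach_n S \<tau> lab T Z 0 p = (if p \<in> Z then 1 else 0)"
| "reach_n S \<tau> lab T Z (Suc n) p = (if p \<in> Z then 1
      else measure_pmf.expectation (chain_step S \<tau> lab T p) (reach_n S \<tau> lab T Z n))"

definition reach_prob :: "'s set \<Rightarrow> ('s \<Rightarrow> 's pmf) \<Rightarrow> ('s \<Rightarrow> 'l) \<Rightarrow> ('s \<times> 's \<Rightarrow> ('s \<times> 's) pmf)
    \<Rightarrow> 's \<times> 's \<Rightarrow> ('s \<times> 's) set \<Rightarrow> real" where
  "reach_prob S \<tau> lab T p Z = (SUP n. reach_n S \<tau> lab T Z n p)"

end

theory Submission
  imports Defs
begin


definition obj :: "('s \<times> 's \<Rightarrow> real) \<Rightarrow> ('s \<times> 's) pmf \<Rightarrow> real" where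
  "obj e \<omega> = (\<Sum>p\<in>set_pmf \<omega>. pmf \<omega> p * e p)"

lemma couplings_set:
  assumes "\<omega> \<in> couplings \<mu> \<nu>" shows "set_pmf \<omega> \<subseteq> set_pmf \<mu> \<times> set_pmf \<nu>"
proof -
  have "fst ` set_pmf \<omega> = set_pmf \<mu>" "snd ` set_pmf \<omega> = set_pmf \<nu>"
    using assms unfolding couplings_def by (metis (mono_tags) mem_Collect_eq set_map_pmf)+
  thus ?thesis by force
qed

lemma pmf_fst_sum:
  assumes "set_pmf \<omega> \<subseteq> A \<times> B" "finite B"
  shows "pmf (map_pmf fst \<omega>) a = (\<Sum>b\<in>B. pmf \<omega> (a,b))"
proof -
  have "pmf (map_pmf fst \<omega>) a = measure \<omega> (fst -` {a})" by (rule pmf_map)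
  also have "\<dots> = measure \<omega> (fst -` {a} \<inter> set_pmf \<omega>)" by (simp add: measure_Int_set_pmf)
  also have "fst -` {a} \<inter> set_pmf \<omega> = ({a} \<times> B) \<inter> set_pmf \<omega>" using assms(1) by auto
  also have "measure \<omega> \<dots> = measure \<omega> ({a} \<times> B)" by (simp add: measure_Int_set_pmf)
  also have "\<dots> = sum (pmf \<omega>) ({a} \<times> B)" using assms(2) by (simp add: measure_measure_pmf_finite)
  also have "\<dots> = (\<Sum>b\<in>B. pmf \<omega> (a,b))"
  proof -
    have "{a} \<times> B = Pair a ` B" by auto
    thus ?thesis by (simp add: sum.reindex inj_on_def)
  qed
  finally show ?thesis .
qed

lemma pmf_snd_sum:
  assumes "set_pmf \<omega> \<subseteq> A \<times> B" "finite A"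
  shows "pmf (map_pmf snd \<omega>) b = (\<Sum>a\<in>A. pmf \<omega> (a,b))"
proof -
  have "pmf (map_pmf snd \<omega>) b = measure \<omega> (snd -` {b})" by (rule pmf_map)
  also have "\<dots> = measure \<omega> (snd -` {b} \<inter> set_pmf \<omega>)" by (simp add: measure_Int_set_pmf)
  also have "snd -` {b} \<inter> set_pmf \<omega> = (A \<times> {b}) \<inter> set_pmf \<omega>" using assms(1) by auto
  also have "measure \<omega> \<dots> = measure \<omega> (A \<times> {b})" by (simp add: measure_Int_set_pmf)
  also have "\<dots> = sum (pmf \<omega>) (A \<times> {b})" using assms(2) by (simp add: measure_measure_pmf_finite)
  also have "\<dots> = (\<Sum>a\<in>A. pmf \<omega> (a,b))"
  proof -
    have "A \<times> {b} = (\<lambda>a. (a,b)) ` A" by auto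
    thus ?thesis by (simp add: sum.reindex inj_on_def)
  qed
  finally show ?thesis .
qed

lemma coupling_min:
  fixes \<mu> \<nu> :: "'s pmf" and e :: "'s \<times> 's \<Rightarrow> real"
  assumes fA: "finite (set_pmf \<mu>)" and fB: "finite (set_pmf \<nu>)"
  shows "\<exists>\<omega>\<in>couplings \<mu> \<nu>. \<forall>\<omega>'\<in>couplings \<mu> \<nu>. obj e \<omega> \<le> obj e \<omega>'"
proof -
  define A where "A = set_pmf \<mu>"
  define B where "B = set_pmf \<nu>"
  have fA': "finite A" and fB': "finite B" using fA fB by (auto simp: A_def B_def)
  define Box :: "('s \<times> 's \<Rightarrow> real) set" where
    "Box = PiE UNIV (\<lambda>q. if q \<in> A \<times> B then {0..1} else {0})"
  define K1 where "K1 = (\<Inter>a. {f :: 's \<times> 's \<Rightarrow> real. (\<Sum>b\<in>B. f (a,b)) = pmf \<mu> a})"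
  define K2 where "K2 = (\<Inter>b. {f :: 's \<times> 's \<Rightarrow> real. (\<Sum>a\<in>A. f (a,b)) = pmf \<nu> b})"
  define K where "K = Box \<inter> K1 \<inter> K2"
  define F where "F f = (\<Sum>q\<in>A \<times> B. f q * e q)" for f :: "'s \<times> 's \<Rightarrow> real"
  have cBox: "compact Box"
  proof -
    have "compactin (product_topology (\<lambda>i. euclidean) UNIV) Box"
      unfolding Box_def by (subst compactin_PiE) auto
    thus ?thesis by (simp add: euclidean_product_topology)
  qed
  have cK1: "closed K1" unfolding K1_def
    by (intro closed_INT ballI closed_Collect_eq continuous_intros continuous_on_sum
        continuous_on_product_coordinates) 
  have cK2: "closed K2" unfolding K2_def
    by (intro closed_INT ballI closed_Collect_eq continuous_intros continuous_on_sum
        continuous_on_product_coordinates) 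
  have cK: "compact K" unfolding K_def
    using cBox cK1 cK2 by (simp add: compact_Int_closed closed_Int Int_assoc)
  have inK: "pmf \<omega> \<in> K" if "\<omega> \<in> couplings \<mu> \<nu>" for \<omega>
  proof -
    have s: "set_pmf \<omega> \<subseteq> A \<times> B" using couplings_set[OF that] by (simp add: A_def B_def)
    have m: "map_pmf fst \<omega> = \<mu>" "map_pmf snd \<omega> = \<nu>" using that by (auto simp: couplings_def)
    have "pmf \<omega> \<in> Box" unfolding Box_def using s
      by (auto simp: pmf_le_1 set_pmf_iff)
    moreover have "pmf \<omega> \<in> K1" unfolding K1_def using pmf_fst_sum[OF s fB'] m by auto
    moreover have "pmf \<omega> \<in> K2" unfolding K2_def using pmf_snd_sum[OF s fA'] m by auto
    ultimately show ?thesis by (simp add: K_def)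
  qed
  have objF: "obj e \<omega> = F (pmf \<omega>)" if "set_pmf \<omega> \<subseteq> A \<times> B" for \<omega>
    unfolding obj_def F_def
    by (rule sum.mono_neutral_left) (use that fA' fB' in \<open>auto simp: set_pmf_iff\<close>)
  have "pair_pmf \<mu> \<nu> \<in> couplings \<mu> \<nu>" by (simp add: couplings_def map_fst_pair_pmf map_snd_pair_pmf)
  hence Kne: "K \<noteq> {}" using inK by blast
  have contF: "continuous_on K F" unfolding F_def
    by (intro continuous_intros continuous_on_sum continuous_on_product_then_coordinatewise continuous_on_id)
  obtain f0 where f0: "f0 \<in> K" and f0min: "\<And>f. f \<in> K \<Longrightarrow> F f0 \<le> F f"
    using continuous_attains_inf[OF cK Kne contF] by blast
  have f0box: "\<And>q. f0 q \<in> (if q \<in> A \<times> B then {0..1} else {0})" proof -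
    have "f0 \<in> Box" using f0 by (simp add: K_def)
    thus "\<And>q. f0 q \<in> (if q \<in> A \<times> B then {0..1} else {0})" unfolding Box_def by (rule PiE_mem) auto
  qed
  have nn: "\<And>q. 0 \<le> f0 q" using f0box by (metis atLeastAtMost_iff order.refl singletonD)
  have z: "\<And>q. q \<notin> A \<times> B \<Longrightarrow> f0 q = 0" using f0box by (metis singletonD)
  have sum1: "(\<Sum>q\<in>A \<times> B. f0 q) = 1"
  proof -
    have "(\<Sum>q\<in>A \<times> B. f0 q) = (\<Sum>a\<in>A. \<Sum>b\<in>B. f0 (a,b))" by (simp add: sum.cartesian_product)
    also have "\<dots> = (\<Sum>a\<in>A. pmf \<mu> a)" using f0 by (auto simp: K_def K1_def)
    also have "\<dots> = 1" unfolding A_def using fA by (simp add: sum_pmf_eq_1)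
    finally show ?thesis .
  qed
  have prob: "(\<integral>\<^sup>+x. ennreal (f0 x) \<partial>count_space UNIV) = 1"
  proof -
    have "(\<integral>\<^sup>+x. ennreal (f0 x) \<partial>count_space UNIV) = (\<Sum>x\<in>A \<times> B. ennreal (f0 x))"
      by (rule nn_integral_count_space') (use fA' fB' z in auto)
    also have "\<dots> = ennreal (\<Sum>x\<in>A \<times> B. f0 x)" by (simp add: nn sum_ennreal)
    finally show ?thesis using sum1 by simp
  qed
  define \<omega>0 where "\<omega>0 = embed_pmf f0"
  have p0: "pmf \<omega>0 = f0" unfolding \<omega>0_def using pmf_embed_pmf[OF nn prob] by auto
  have s0: "set_pmf \<omega>0 \<subseteq> A \<times> B"
  proof
    fix q assume "q \<in> set_pmf \<omega>0"
    hence "f0 q \<noteq> 0" using p0 by (simp add: set_pmf_iff)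
    thus "q \<in> A \<times> B" using z by blast
  qed
  have "\<omega>0 \<in> couplings \<mu> \<nu>"
  proof -
    have "map_pmf fst \<omega>0 = \<mu>"
    proof (rule pmf_eqI)
      fix a show "pmf (map_pmf fst \<omega>0) a = pmf \<mu> a"
        using pmf_fst_sum[OF s0 fB'] f0 p0 by (auto simp: K_def K1_def)
    qed
    moreover have "map_pmf snd \<omega>0 = \<nu>"
    proof (rule pmf_eqI)
      fix b show "pmf (map_pmf snd \<omega>0) b = pmf \<nu> b"
        using pmf_snd_sum[OF s0 fA'] f0 p0 by (auto simp: K_def K2_def)
    qed
    ultimately show ?thesis by (simp add: couplings_def)
  qed
  moreover have "\<forall>\<omega>'\<in>couplings \<mu> \<nu>. obj e \<omega>0 \<le> obj e \<omega>'"
  proof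
    fix \<omega>' assume w: "\<omega>' \<in> couplings \<mu> \<nu>"
    have "set_pmf \<omega>' \<subseteq> A \<times> B" using couplings_set[OF w] by (simp add: A_def B_def)
    thus "obj e \<omega>0 \<le> obj e \<omega>'" using objF[OF s0] objF f0min[OF inK[OF w]] p0 by simp
  qed
  ultimately show ?thesis by blast
qed



lemma obj_mono:
  assumes "set_pmf \<omega> \<subseteq> X" "\<And>q. q \<in> X \<Longrightarrow> e q \<le> e' q"
  shows "obj e \<omega> \<le> obj e' \<omega>"
  unfolding obj_def using assms by (intro sum_mono mult_left_mono) auto

lemma obj_const:
  assumes "finite (set_pmf \<omega>)" "\<And>q. q \<in> set_pmf \<omega> \<Longrightarrow> e q = c"
  shows "obj e \<omega> = c"
proof -
  have "obj e \<omega> = (\<Sum>p\<in>set_pmf \<omega>. pmf \<omega> p) * c"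
    unfolding obj_def using assms(2) by (simp add: sum_distrib_right)
  also have "\<dots> = c" using assms(1) by (simp add: sum_pmf_eq_1)
  finally show ?thesis .
qed

lemma obj_bounds:
  assumes "finite (set_pmf \<omega>)" "\<And>q. q \<in> set_pmf \<omega> \<Longrightarrow> 0 \<le> f q \<and> f q \<le> 1"
  shows "0 \<le> obj f \<omega> \<and> obj f \<omega> \<le> 1"
proof
  have "obj (\<lambda>_. 0) \<omega> \<le> obj f \<omega>" using assms(2) by (intro obj_mono[of _ "set_pmf \<omega>"]) auto
  thus "0 \<le> obj f \<omega>" using obj_const[OF assms(1), of "\<lambda>_. 0" 0] by simp
  have "obj f \<omega> \<le> obj (\<lambda>_. 1) \<omega>" using assms(2) by (intro obj_mono[of _ "set_pmf \<omega>"]) auto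
  thus "obj f \<omega> \<le> 1" using obj_const[OF assms(1), of "\<lambda>_. 1" 1] by simp
qed

lemma E_obj:
  assumes "finite (set_pmf M)"
  shows "measure_pmf.expectation M f = obj f M"
  unfolding obj_def by (subst integral_measure_pmf[OF assms]) auto

lemma Delta_diff: "lab s \<noteq> lab t \<Longrightarrow> Delta \<tau> lab e (s,t) = 1"
  by (simp add: Delta_def)

lemma Delta_le:
  assumes "lab s = lab t" "finite (set_pmf (\<tau> s))" "finite (set_pmf (\<tau> t))"
    "\<omega> \<in> couplings (\<tau> s) (\<tau> t)"
  shows "Delta \<tau> lab e (s,t) \<le> obj e \<omega>"
proof -
  obtain \<omega>0 where w0: "\<omega>0 \<in> couplings (\<tau> s) (\<tau> t)" "\<forall>\<omega>'\<in>couplings (\<tau> s) (\<tau> t). obj e \<omega>0 \<le> obj e \<omega>'"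
    using coupling_min[OF assms(2,3)] by blast
  have "bdd_below ((\<lambda>\<omega>. obj e \<omega>) ` couplings (\<tau> s) (\<tau> t))" using w0 by (auto intro!: bdd_belowI)
  hence "Inf ((\<lambda>\<omega>. obj e \<omega>) ` couplings (\<tau> s) (\<tau> t)) \<le> obj e \<omega>"
    using assms(4) by (intro cInf_lower) auto
  thus ?thesis using assms(1) by (simp add: Delta_def obj_def)
qed

lemma Delta_eq:
  assumes "lab s = lab t" "finite (set_pmf (\<tau> s))" "finite (set_pmf (\<tau> t))"
  shows "\<exists>\<omega>\<in>couplings (\<tau> s) (\<tau> t). Delta \<tau> lab e (s,t) = obj e \<omega>"
proof -
  obtain \<omega>0 where w0: "\<omega>0 \<in> couplings (\<tau> s) (\<tau> t)" "\<forall>\<omega>'\<in>couplings (\<tau> s) (\<tau> t). obj e \<omega>0 \<le> obj e \<omega>'"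
    using coupling_min[OF assms(2,3)] by blast
  have "Inf ((\<lambda>\<omega>. obj e \<omega>) ` couplings (\<tau> s) (\<tau> t)) = obj e \<omega>0"
    using w0 by (intro cInf_eq_minimum) auto
  thus ?thesis using assms(1) w0(1) by (auto simp add: Delta_def obj_def)
qed

lemma bisim_coupling:
  assumes R: "prob_bisim S \<tau> lab R" and st: "(s,t) \<in> R"
    and sup: "\<And>x. x \<in> S \<Longrightarrow> set_pmf (\<tau> x) \<subseteq> S"
  shows "\<exists>\<omega>\<in>couplings (\<tau> s) (\<tau> t). set_pmf \<omega> \<subseteq> R"
proof -
  have eq: "equiv S R" using R by (simp add: prob_bisim_def)
  have RS: "R \<subseteq> S \<times> S" using eq by (auto simp: equiv_def refl_on_def)
  have sS: "s \<in> S" "t \<in> S" using st RS by auto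
  have cls: "\<And>E. E \<in> S // R \<Longrightarrow> measure (\<tau> s) E = measure (\<tau> t) E"
    using R st unfolding prob_bisim_def by fastforce
  define R' where "R' x y \<longleftrightarrow> (x,y) \<in> R \<or> x = y" for x y
  have ep: "equivp R'"
  proof (rule equivpI)
    show "reflp R'" by (simp add: R'_def reflp_def)
    show "symp R'" using eq by (auto simp: R'_def symp_def equiv_def sym_def)
    show "transp R'" using eq unfolding R'_def transp_def equiv_def trans_def by blast
  qed
  have "rel_pmf R' (\<tau> s) (\<tau> t)"
  proof (subst rel_pmf_iff_equivp[OF ep], intro ballI)
    fix C assume "C \<in> UNIV // {(x, y). R' x y}"
    then obtain x where C: "C = {(x, y). R' x y} `` {x}" by (auto elim: quotientE)
    show "measure (\<tau> s) C = measure (\<tau> t) C"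
    proof (cases "x \<in> S")
      case True
      have "C = R `` {x}" using C True eq by (auto simp: R'_def equiv_def refl_on_def)
      moreover have "R `` {x} \<in> S // R" using True by (rule quotientI)
      ultimately show ?thesis using cls by simp
    next
      case False
      have "C = {x}" using C False RS by (auto simp: R'_def)
      moreover have "x \<notin> set_pmf (\<tau> s)" "x \<notin> set_pmf (\<tau> t)" using False sup sS by auto
      ultimately show ?thesis by (simp add: measure_pmf_single set_pmf_iff)
    qed
  qed
  then obtain pq where pq: "\<And>x y. (x, y) \<in> set_pmf pq \<Longrightarrow> R' x y"
    "map_pmf fst pq = \<tau> s" "map_pmf snd pq = \<tau> t"
    by (erule rel_pmf.cases)
  have "set_pmf pq \<subseteq> R"
  proof
    fix q assume q: "q \<in> set_pmf pq"
    obtain a b where ab: "q = (a,b)" by force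
    have "a \<in> set_pmf (\<tau> s)" using q ab pq(2) by (metis fst_conv image_eqI set_map_pmf)
    hence "a \<in> S" using sup sS by auto
    thus "q \<in> R" using pq(1) q ab eq by (auto simp: R'_def equiv_def refl_on_def)
  qed
  thus ?thesis using pq(2,3) by (auto simp: couplings_def)
qed



locale LMC =
  fixes S :: "'s set" and L :: "'l set" and \<tau> :: "'s \<Rightarrow> 's pmf" and lab :: "'s \<Rightarrow> 'l"
  assumes lmc: "lmc S L \<tau> lab"
begin

lemma sup: "x \<in> S \<Longrightarrow> set_pmf (\<tau> x) \<subseteq> S" using lmc by (auto simp: lmc_def)
lemma fin: "x \<in> S \<Longrightarrow> finite (set_pmf (\<tau> x))" using lmc by (auto simp: lmc_def)

lemma coup_set: "s \<in> S \<Longrightarrow> t \<in> S \<Longrightarrow> \<omega> \<in> couplings (\<tau> s) (\<tau> t) \<Longrightarrow> set_pmf \<omega> \<subseteq> S \<times> S"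
  using couplings_set[of \<omega> "\<tau> s" "\<tau> t"] sup by blast

lemma coup_fin: "s \<in> S \<Longrightarrow> t \<in> S \<Longrightarrow> \<omega> \<in> couplings (\<tau> s) (\<tau> t) \<Longrightarrow> finite (set_pmf \<omega>)"
  using couplings_set[of \<omega> "\<tau> s" "\<tau> t"] fin by (meson finite_SigmaI finite_subset)

lemma Delta_mono:
  assumes p: "p \<in> S \<times> S" and le: "\<And>q. q \<in> S \<times> S \<Longrightarrow> e q \<le> e' q"
  shows "Delta \<tau> lab e p \<le> Delta \<tau> lab e' p"
proof -
  obtain s t where st: "p = (s,t)" "s \<in> S" "t \<in> S" using p by auto
  show ?thesis
  proof (cases "lab s = lab t")
    case False thus ?thesis using st by (simp add: Delta_diff)
  next
    case True
    obtain \<omega> where w: "\<omega> \<in> couplings (\<tau> s) (\<tau> t)" "Delta \<tau> lab e' (s,t) = obj e' \<omega>"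
      using Delta_eq[OF True fin[OF st(2)] fin[OF st(3)]] st by blast
    have "Delta \<tau> lab e (s,t) \<le> obj e \<omega>" using Delta_le[OF True fin[OF st(2)] fin[OF st(3)] w(1)] st by simp
    also have "\<dots> \<le> obj e' \<omega>" using coup_set[OF st(2,3) w(1)] le by (rule obj_mono)
    finally show ?thesis using w st by simp
  qed
qed

lemma Delta_nonneg:
  assumes p: "p \<in> S \<times> S" and nn: "\<And>q. q \<in> S \<times> S \<Longrightarrow> 0 \<le> e q"
  shows "0 \<le> Delta \<tau> lab e p"
proof -
  obtain s t where st: "p = (s,t)" "s \<in> S" "t \<in> S" using p by auto
  show ?thesis
  proof (cases "lab s = lab t")
    case False thus ?thesis using st by (simp add: Delta_diff)
  next
    case True
    obtain \<omega> where w: "\<omega> \<in> couplings (\<tau> s) (\<tau> t)" "Delta \<tau> lab e (s,t) = obj e \<omega>"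
      using Delta_eq[OF True fin[OF st(2)] fin[OF st(3)]] st by blast
    have "obj (\<lambda>_. 0) \<omega> \<le> obj e \<omega>" using coup_set[OF st(2,3) w(1)] nn by (rule obj_mono)
    moreover have "obj (\<lambda>_. 0) \<omega> = 0" using coup_fin[OF st(2,3) w(1)] by (rule obj_const) simp
    ultimately show ?thesis using w st by simp
  qed
qed

definition P where "P = {e. dfun S e \<and> (\<forall>p\<in>S \<times> S. Delta \<tau> lab e p \<le> e p)}"
definition d0 where "d0 p = (if p \<in> S \<times> S then Inf ((\<lambda>e. e p) ` P) else 0)"

lemma one_P: "(\<lambda>p. if p \<in> S \<times> S then 1 else 0) \<in> P"
proof -
  let ?o = "(\<lambda>p. if p \<in> S \<times> S then 1 else 0) :: 's \<times> 's \<Rightarrow> real"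
  have "Delta \<tau> lab ?o p \<le> ?o p" if p: "p \<in> S \<times> S" for p
  proof -
    obtain s t where st: "p = (s,t)" "s \<in> S" "t \<in> S" using p by auto
    show ?thesis
    proof (cases "lab s = lab t")
      case False thus ?thesis using st by (simp add: Delta_diff)
    next
      case True
      have w: "pair_pmf (\<tau> s) (\<tau> t) \<in> couplings (\<tau> s) (\<tau> t)"
        by (simp add: couplings_def map_fst_pair_pmf map_snd_pair_pmf)
      have "Delta \<tau> lab ?o (s,t) \<le> obj ?o (pair_pmf (\<tau> s) (\<tau> t))" by (rule Delta_le[OF True fin[OF st(2)] fin[OF st(3)] w])
      also have "\<dots> = 1" using coup_fin[OF st(2,3) w] coup_set[OF st(2,3) w] by (intro obj_const) auto
      finally show ?thesis using st by simp
    qed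
  qed
  thus ?thesis by (auto simp: P_def dfun_def)
qed

lemma P_ne: "P \<noteq> {}" using one_P by blast

lemma P_bounds: "e \<in> P \<Longrightarrow> p \<in> S \<times> S \<Longrightarrow> 0 \<le> e p \<and> e p \<le> 1"
  unfolding P_def dfun_def by blast

lemma d0_le: "e \<in> P \<Longrightarrow> p \<in> S \<times> S \<Longrightarrow> d0 p \<le> e p"
proof -
  assume e: "e \<in> P" and p: "p \<in> S \<times> S"
  have "bdd_below ((\<lambda>e. e p) ` P)"
  proof (rule bdd_belowI[where m=0])
    fix x assume "x \<in> (\<lambda>e. e p) ` P"
    then obtain e' where "e' \<in> P" "x = e' p" by blast
    thus "0 \<le> x" using P_bounds p by blast
  qed
  thus ?thesis unfolding d0_def using e p by (simp add: cInf_lower)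
qed

lemma d0_ge: "p \<in> S \<times> S \<Longrightarrow> 0 \<le> d0 p"
  unfolding d0_def using P_ne P_bounds by (auto intro!: cInf_greatest)

lemma d0_le1: "p \<in> S \<times> S \<Longrightarrow> d0 p \<le> 1"
  using d0_le[OF one_P] by fastforce

lemma d0_dfun: "dfun S d0"
  using d0_ge d0_le1 by (auto simp: dfun_def d0_def)

lemma d0_pre: "p \<in> S \<times> S \<Longrightarrow> Delta \<tau> lab d0 p \<le> d0 p"
proof -
  assume p: "p \<in> S \<times> S"
  have "Delta \<tau> lab d0 p \<le> e p" if e: "e \<in> P" for e
  proof -
    have "Delta \<tau> lab d0 p \<le> Delta \<tau> lab e p" using p d0_le[OF e] by (intro Delta_mono)
    also have "\<dots> \<le> e p" using e p by (auto simp: P_def)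
    finally show ?thesis .
  qed
  thus ?thesis unfolding d0_def using p P_ne by (auto intro!: cInf_greatest)
qed

lemma d0_fix: "p \<in> S \<times> S \<Longrightarrow> Delta \<tau> lab d0 p = d0 p"
proof -
  assume p: "p \<in> S \<times> S"
  define e' where "e' q = (if q \<in> S \<times> S then Delta \<tau> lab d0 q else 0)" for q
  have "e' \<in> P"
  proof -
    have "0 \<le> Delta \<tau> lab d0 q \<and> Delta \<tau> lab d0 q \<le> 1" if "q \<in> S \<times> S" for q
    proof -
      have "0 \<le> Delta \<tau> lab d0 q" by (rule Delta_nonneg[OF that]) (rule d0_ge)
      thus ?thesis using d0_pre[OF that] d0_le1[OF that] by linarith
    qed
    hence "dfun S e'" unfolding dfun_def e'_def by auto
    moreover have "Delta \<tau> lab e' q \<le> e' q" if q: "q \<in> S \<times> S" for q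
    proof -
      have "Delta \<tau> lab e' q \<le> Delta \<tau> lab d0 q" using q d0_pre by (intro Delta_mono) (auto simp: e'_def)
      thus ?thesis using q by (simp add: e'_def)
    qed
    ultimately show ?thesis by (simp add: P_def)
  qed
  hence "d0 p \<le> e' p" using d0_le p by blast
  hence "d0 p \<le> Delta \<tau> lab d0 p" using p by (simp add: e'_def)
  thus ?thesis using d0_pre[OF p] by simp
qed

lemma bdist_eq: "bdist S \<tau> lab = d0"
proof -
  have fx: "is_fixpoint S \<tau> lab d0" using d0_dfun d0_fix by (simp add: is_fixpoint_def)
  have fixP: "e \<in> P" if "is_fixpoint S \<tau> lab e" for e
    using that by (simp add: is_fixpoint_def P_def)
  have least: "\<forall>e'. is_fixpoint S \<tau> lab e' \<longrightarrow> (\<forall>p\<in>S \<times> S. d0 p \<le> e' p)"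
  proof (intro allI impI ballI)
    fix e' p assume "is_fixpoint S \<tau> lab e'" "p \<in> S \<times> S"
    thus "d0 p \<le> e' p" using d0_le fixP by blast
  qed
  show ?thesis unfolding bdist_def
  proof (rule the_equality)
    show "is_fixpoint S \<tau> lab d0 \<and> (\<forall>e'. is_fixpoint S \<tau> lab e' \<longrightarrow> (\<forall>p\<in>S \<times> S. d0 p \<le> e' p))"
      using fx least by blast
  next
    fix e assume e: "is_fixpoint S \<tau> lab e \<and> (\<forall>e'. is_fixpoint S \<tau> lab e' \<longrightarrow> (\<forall>p\<in>S \<times> S. e p \<le> e' p))"
    have eP: "e \<in> P" using e fixP by blast
    show "e = d0"
    proof (rule ext)
      fix p show "e p = d0 p"
      proof (cases "p \<in> S \<times> S")
        case True
        have "e p \<le> d0 p" using conjunct2[OF e, rule_format, OF fx True] .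
        moreover have "d0 p \<le> e p" using d0_le[OF eP True] .
        ultimately show ?thesis by (rule antisym)
      next
        case False
        have "dfun S e" using e by (simp add: is_fixpoint_def)
        have z1: "\<forall>q. q \<notin> S \<times> S \<longrightarrow> e q = 0" using \<open>dfun S e\<close> unfolding dfun_def by (rule conjunct1)
        have z2: "\<forall>q. q \<notin> S \<times> S \<longrightarrow> d0 q = 0" using d0_dfun unfolding dfun_def by (rule conjunct1)
        show ?thesis using z1[rule_format, OF False] z2[rule_format, OF False] by simp
      qed
    qed
  qed
qed

lemma bis_facts:
  assumes "p \<in> bisimilar S \<tau> lab"
  shows "p \<in> S \<times> S" "lab (fst p) = lab (snd p)"
proof -
  obtain R where R: "prob_bisim S \<tau> lab R" "p \<in> R" using assms by (auto simp: bisimilar_def)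
  have "R \<subseteq> S \<times> S" using R(1) by (auto simp: prob_bisim_def equiv_def refl_on_def)
  thus "p \<in> S \<times> S" using R by auto
  show "lab (fst p) = lab (snd p)" using R unfolding prob_bisim_def by (cases p) fastforce
qed

abbreviation Z where "Z \<equiv> S2_1 S lab"
abbreviation cs where "cs T \<equiv> chain_step S \<tau> lab T"
abbreviation rn where "rn T n p \<equiv> reach_n S \<tau> lab T Z n p"
abbreviation rp where "rp T p \<equiv> reach_prob S \<tau> lab T p Z"

lemma S2q_SS: "p \<in> S2_q S \<tau> lab \<Longrightarrow> p \<in> S \<times> S \<and> p \<notin> Z \<and> p \<notin> bisimilar S \<tau> lab"
  by (auto simp: S2_q_def S2_0_def)

lemma Z_iff: "p \<in> S \<times> S \<Longrightarrow> p \<in> Z \<longleftrightarrow> lab (fst p) \<noteq> lab (snd p)"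
  by (auto simp: S2_1_def)

lemma cs_props:
  assumes pol: "policy S \<tau> lab T"
  shows "finite (set_pmf (cs T p)) \<and> (p \<in> S \<times> S \<longrightarrow> set_pmf (cs T p) \<subseteq> S \<times> S)"
proof (cases "p \<in> S2_q S \<tau> lab")
  case True
  obtain s t where st: "p = (s,t)" "s \<in> S" "t \<in> S" using S2q_SS[OF True] by auto
  have "T (s,t) \<in> couplings (\<tau> s) (\<tau> t)" using pol True st unfolding policy_def by auto
  thus ?thesis using coup_set[OF st(2,3)] coup_fin[OF st(2,3)] True st by (simp add: chain_step_def)
next
  case False thus ?thesis by (simp add: chain_step_def)
qed

lemma rn_Suc: "p \<notin> Z \<Longrightarrow> policy S \<tau> lab T \<Longrightarrow> rn T (Suc n) p = obj (rn T n) (cs T p)"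
  using cs_props by (simp add: E_obj)

lemma rn_bounds: "policy S \<tau> lab T \<Longrightarrow> 0 \<le> rn T n p \<and> rn T n p \<le> 1"
proof (induction n arbitrary: p)
  case 0 thus ?case by simp
next
  case (Suc n)
  show ?case
  proof (cases "p \<in> Z")
    case False
    have "rn T (Suc n) p = obj (rn T n) (cs T p)" by (rule rn_Suc[OF False Suc.prems])
    moreover have "0 \<le> obj (rn T n) (cs T p) \<and> obj (rn T n) (cs T p) \<le> 1"
      by (rule obj_bounds) (use cs_props[OF Suc.prems] Suc.IH[OF Suc.prems] in auto)
    ultimately show ?thesis by simp
  qed simp
qed

lemma rn_mono: "policy S \<tau> lab T \<Longrightarrow> rn T n p \<le> rn T (Suc n) p"
proof (induction n arbitrary: p)
  case 0 thus ?case using rn_bounds[OF 0, of "Suc 0" p] by simp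
next
  case (Suc n)
  show ?case
  proof (cases "p \<in> Z")
    case False
    have "obj (rn T n) (cs T p) \<le> obj (rn T (Suc n)) (cs T p)"
      using Suc.IH[OF Suc.prems] by (intro obj_mono[of _ UNIV]) auto
    thus ?thesis using rn_Suc[OF False Suc.prems] by (metis rn_Suc[OF False Suc.prems])
  qed simp
qed

lemma rp_bdd: "policy S \<tau> lab T \<Longrightarrow> bdd_above (range (\<lambda>n. rn T n p))"
proof -
  assume pol: "policy S \<tau> lab T"
  show ?thesis using rn_bounds[OF pol, of _ p] by (intro bdd_aboveI[where M=1]) auto
qed

lemma rp_lim: "policy S \<tau> lab T \<Longrightarrow> (\<lambda>n. rn T n p) \<longlonglongrightarrow> rp T p"
  unfolding reach_prob_def using rp_bdd by (intro LIMSEQ_incseq_SUP) (auto intro!: incseq_SucI rn_mono)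

lemma rp_ge: "policy S \<tau> lab T \<Longrightarrow> rn T n p \<le> rp T p"
  unfolding reach_prob_def using rp_bdd by (intro cSUP_upper) auto

lemma rp_bounds: "policy S \<tau> lab T \<Longrightarrow> 0 \<le> rp T p \<and> rp T p \<le> 1"
proof
  assume pol: "policy S \<tau> lab T"
  show "0 \<le> rp T p" using rp_ge[OF pol, of 0] rn_bounds[OF pol, of 0] by (meson order.trans)
  show "rp T p \<le> 1" unfolding reach_prob_def using rn_bounds[OF pol, of _ p] by (intro cSUP_least) auto
qed

lemma rp_Z: "p \<in> Z \<Longrightarrow> rp T p = 1"
proof -
  assume "p \<in> Z"
  hence "\<And>n. rn T n p = 1" by (case_tac n) auto
  thus ?thesis by (simp add: reach_prob_def)
qed

lemma rn_bis: "p \<in> bisimilar S \<tau> lab \<Longrightarrow> rn T n p = 0"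
proof (induction n)
  case 0 thus ?case using bis_facts[OF 0] Z_iff by auto
next
  case (Suc n)
  have "p \<notin> Z" using bis_facts[OF Suc.prems] Z_iff by auto
  moreover have "p \<notin> S2_q S \<tau> lab" using S2q_SS Suc.prems by blast
  ultimately show ?case using Suc by (simp add: chain_step_def)
qed

lemma rp_bis: "p \<in> bisimilar S \<tau> lab \<Longrightarrow> rp T p = 0"
  using rn_bis by (simp add: reach_prob_def)

definition Topt where
  "Topt p = (if p \<in> S2_q S \<tau> lab then
     (SOME \<omega>. \<omega> \<in> couplings (\<tau> (fst p)) (\<tau> (snd p)) \<and> Delta \<tau> lab d0 p = obj d0 \<omega>)
   else return_pmf p)"

lemma Topt_prop:
  assumes p: "p \<in> S2_q S \<tau> lab"
  shows "Topt p \<in> couplings (\<tau> (fst p)) (\<tau> (snd p)) \<and> Delta \<tau> lab d0 p = obj d0 (Topt p)"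
proof -
  obtain s t where st: "p = (s,t)" "s \<in> S" "t \<in> S" using S2q_SS[OF p] by auto
  have "lab s = lab t" using S2q_SS[OF p] Z_iff st by auto
  from Delta_eq[OF this fin[OF st(2)] fin[OF st(3)]] st
  have "\<exists>\<omega>. \<omega> \<in> couplings (\<tau> (fst p)) (\<tau> (snd p)) \<and> Delta \<tau> lab d0 p = obj d0 \<omega>" by auto
  from someI_ex[OF this] show ?thesis using p by (simp add: Topt_def)
qed

lemma Topt_pol: "policy S \<tau> lab Topt"
  unfolding policy_def using Topt_prop by fastforce

lemma d0_Z: "p \<in> Z \<Longrightarrow> d0 p = 1"
proof -
  assume z: "p \<in> Z"
  hence p: "p \<in> S \<times> S" by (auto simp: S2_1_def)
  have "d0 p = Delta \<tau> lab d0 p" using d0_fix[OF p] by simp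
  also have "\<dots> = 1" using z by (cases p) (auto simp: S2_1_def Delta_diff)
  finally show ?thesis .
qed

lemma rn_opt_le: "p \<in> S \<times> S \<Longrightarrow> rn Topt n p \<le> d0 p"
proof (induction n arbitrary: p)
  case 0 thus ?case using d0_Z d0_ge by auto
next
  case (Suc n)
  show ?case
  proof (cases "p \<in> Z")
    case True thus ?thesis using d0_Z by simp
  next
    case False
    show ?thesis
    proof (cases "p \<in> S2_q S \<tau> lab")
      case True
      obtain s t where st: "p = (s,t)" "s \<in> S" "t \<in> S" using S2q_SS[OF True] by auto
      have c: "Topt p \<in> couplings (\<tau> s) (\<tau> t)" using Topt_prop[OF True] st by simp
      have "rn Topt (Suc n) p = obj (rn Topt n) (Topt p)"
        using rn_Suc[OF False Topt_pol] True by (simp add: chain_step_def)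
      also have "\<dots> \<le> obj d0 (Topt p)" using coup_set[OF st(2,3) c] Suc.IH by (rule obj_mono)
      also have "\<dots> = d0 p" using Topt_prop[OF True] d0_fix[OF Suc.prems] by simp
      finally show ?thesis .
    next
      case nq: False
      have "rn Topt (Suc n) p = rn Topt n p" using False nq by (simp add: chain_step_def)
      thus ?thesis using Suc by simp
    qed
  qed
qed

lemma rp_opt_le: "p \<in> S \<times> S \<Longrightarrow> rp Topt p \<le> d0 p"
  unfolding reach_prob_def using rn_opt_le by (auto intro!: cSUP_least)

lemma d0_le_rp:
  assumes pol: "policy S \<tau> lab T'" and p: "p \<in> S \<times> S"
  shows "d0 p \<le> rp T' p"
proof -
  define e where "e q = (if q \<in> S \<times> S then rp T' q else 0)" for q
  have "e \<in> P"
  proof -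
    have "dfun S e" using rp_bounds[OF pol] by (auto simp: dfun_def e_def)
    moreover have "Delta \<tau> lab e q \<le> e q" if q: "q \<in> S \<times> S" for q
    proof -
      obtain s t where st: "q = (s,t)" "s \<in> S" "t \<in> S" using q by auto
      show ?thesis
      proof (cases "lab s = lab t")
        case False
        hence "q \<in> Z" using st by (auto simp: S2_1_def)
        thus ?thesis using st False by (simp add: Delta_diff e_def rp_Z)
      next
        case lt: True
        hence nz: "q \<notin> Z" using st by (auto simp: S2_1_def)
        show ?thesis
        proof (cases "q \<in> S2_q S \<tau> lab")
          case True
          have c: "T' q \<in> couplings (\<tau> s) (\<tau> t)" using pol True st unfolding policy_def by auto
          have cs: "cs T' q = T' q" using True by (simp add: chain_step_def)
          have "Delta \<tau> lab e q \<le> obj e (T' q)" using Delta_le[OF lt fin[OF st(2)] fin[OF st(3)] c] st by simp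
          also have "\<dots> \<le> obj (rp T') (T' q)" using coup_set[OF st(2,3) c] by (rule obj_mono) (simp add: e_def)
          also have "\<dots> \<le> rp T' q"
          proof (rule LIMSEQ_le_const2)
            show "(\<lambda>n. obj (rn T' n) (T' q)) \<longlonglongrightarrow> obj (rp T') (T' q)"
              unfolding obj_def by (intro tendsto_sum tendsto_mult_left rp_lim[OF pol])
            show "\<exists>N. \<forall>n\<ge>N. obj (rn T' n) (T' q) \<le> rp T' q"
              using rn_Suc[OF nz pol] cs rp_ge[OF pol] by metis
          qed
          finally show ?thesis using q by (simp add: e_def)
        next
          case False
          hence b: "q \<in> bisimilar S \<tau> lab" using q nz by (auto simp: S2_q_def S2_0_def)
          obtain R where R: "prob_bisim S \<tau> lab R" "q \<in> R" using b by (auto simp: bisimilar_def)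
          obtain \<omega> where w: "\<omega> \<in> couplings (\<tau> s) (\<tau> t)" "set_pmf \<omega> \<subseteq> R"
            using bisim_coupling[OF R(1)] R(2) st sup by blast
          have Rb: "R \<subseteq> bisimilar S \<tau> lab" using R(1) by (auto simp: bisimilar_def)
          have "Delta \<tau> lab e q \<le> obj e \<omega>" using Delta_le[OF lt fin[OF st(2)] fin[OF st(3)] w(1)] st by simp
          also have "obj e \<omega> = 0"
          proof (rule obj_const[OF coup_fin[OF st(2,3) w(1)]])
            fix r assume "r \<in> set_pmf \<omega>"
            hence "r \<in> bisimilar S \<tau> lab" using w(2) Rb by auto
            thus "e r = 0" by (simp add: e_def rp_bis)
          qed
          finally have "Delta \<tau> lab e q \<le> 0" .
          moreover have "0 \<le> e q" using rp_bounds[OF pol, of q] by (simp add: e_def)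
          ultimately show ?thesis by linarith
        qed
      qed
    qed
    ultimately show ?thesis by (simp add: P_def)
  qed
  from d0_le[OF this p] show ?thesis using p by (simp add: e_def)
qed

end

theorem mainTheorem9:
  fixes S :: "'s set" and L :: "'l set" and \<tau> :: "'s \<Rightarrow> 's pmf" and lab :: "'s \<Rightarrow> 'l"
  assumes "lmc S L \<tau> lab"
  shows "\<exists>T. policy S \<tau> lab T \<and>
    (\<forall>s\<in>S. \<forall>t\<in>S. \<forall>T'. policy S \<tau> lab T' \<longrightarrow>
       bdist S \<tau> lab (s,t) = reach_prob S \<tau> lab T (s,t) (S2_1 S lab) \<and>
       reach_prob S \<tau> lab T (s,t) (S2_1 S lab) \<le> reach_prob S \<tau> lab T' (s,t) (S2_1 S lab))"
proof -
  interpret LMC S L \<tau> lab by unfold_locales (rule assms)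
  show ?thesis
  proof (intro exI conjI ballI allI impI)
    show "policy S \<tau> lab Topt" by (rule Topt_pol)
    fix s t T' assume s: "s \<in> S" and t: "t \<in> S" and pol: "policy S \<tau> lab T'"
    have p: "(s,t) \<in> S \<times> S" using s t by simp
    have eq: "d0 (s,t) = rp Topt (s,t)"
      using rp_opt_le[OF p] d0_le_rp[OF Topt_pol p] by simp
    show "bdist S \<tau> lab (s,t) = rp Topt (s,t)" using eq bdist_eq by simp
    show "rp Topt (s,t) \<le> rp T' (s,t)" using eq d0_le_rp[OF pol p] by simp
  qed
qed


end
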